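(* Let $n,k\ge 0$ be integers. The number of partitions $\lambda$ with $\lambda_1\le k$ and $i_{2n}(\lambda)<\infty$ equals $2^k\binom{n+k}{k}$. Equivalently, the total homology $\bigoplus_i \mathrm{H}_i(\mathfrak{H}_V(E);\mathbf{C})$, for $\dim V=2n$ and $\dim E=k$, decomposes as a direct sum of exactly $2^k\binom{n+k}{k}$ irreducible $\mathbf{GL}(E)\times\mathbf{Sp}(V)$-modules, pairwise non-isomorphic.
   Context: Partitions, $\lambda_1$ (the largest part), $\ell(\lambda)$, $|\lambda|$, $\lambda^\dagger$ as usual. Modification rule (defines $i_{2n}(\lambda)\in\mathbf{Z}_{\ge0}\cup\{\infty\}$ and $\tau_{2n}(\lambda)$), recursively: if $\ell(\lambda)\le n$, put $i_{2n}(\lambda)=0$, $\tau_{2n}(\lambda)=\lambda$. If $\ell(\lambda)>n$, let $R_\lambda$ be the border strip (connected skew diagram with no $2\times 2$ square) of $2(\ell(\lambda)-n-1)$ boxes along the rim of $\lambda$ starting at the first box of the last row of $\lambda$, if it exists. If $R_\lambda$ exists, is nonempty, and $\lambda\setminus R_\lambda$ is a partition, then $i_{2n}(\lambda)=c(R_\lambda)+i_{2n}(\lambda\setminus R_\lambda)$ and $\tau_{2n}(\lambda)=\tau_{2n}(\lambda\setminus R_\lambda)$ with $c(R_\lambda)$ the number of columns of $R_\lambda$; otherwise $i_{2n}(\lambda)=\infty$. The Lie algebra $\mathfrak{H}_V(E)=(E\otimes V)\oplus\mathrm{Sym}^2(E)$ for symplectic $(V,\omega_V)$ has bracket $[(e\otimes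 v,x),(e'\otimes v',x')]=(0,\omega_V(v,v')ee')$. *)

theory Defs
  imports Main
begin

definition is_partition :: "nat list \<Rightarrow> bool" where
  "is_partition lam \<longleftrightarrow> sorted_wrt (\<ge>) lam \<and> 0 \<notin> set lam"

definition largest_part :: "nat list \<Rightarrow> nat" where
  "largest_part lam = (if lam = [] then 0 else hd lam)"

text \<open>Young diagram, boxes (row i, column j), 1-based (English convention).\<close>
definition diagram :: "nat list \<Rightarrow> (nat \<times> nat) set" where
  "diagram lam = {(i, j). 1 \<le> i \<and> i \<le> length lam \<and> 1 \<le> j \<and> j \<le> lam ! (i - 1)}"

text \<open>There is exactly one rim box on each diagonal of content j - i between
  1 - length lam and largest_part lam - 1; ordered by content, the rim runs from the
  first box of the last row to the last box of the first row.\<close>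
definition rim :: "nat list \<Rightarrow> (nat \<times> nat) set" where
  "rim lam = {(i, j). (i, j) \<in> diagram lam \<and> (i + 1, j + 1) \<notin> diagram lam}"

definition strip_size :: "nat \<Rightarrow> nat list \<Rightarrow> nat" where
  "strip_size n lam = 2 * (length lam - n - 1)"

text \<open>R_lambda: the first strip_size n lam boxes of the rim, starting at the first box
  (ell,1) of the last row, i.e. the rim boxes of content at most
  strip_size n lam - ell(lambda).  It exists iff strip_size n lam \<le> number of rim boxes
  = ell(lambda) + lambda_1 - 1.\<close>
definition border_strip :: "nat \<Rightarrow> nat list \<Rightarrow> (nat \<times> nat) set" where
  "border_strip n lam = {(i, j). (i, j) \<in> rim lam \<and>
      int j - int i \<le> int (strip_size n lam) - int (length lam)}"

definition border_strip_exists :: "nat \<Rightarrow> nat list \<Rightarrow> bool" where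
  "border_strip_exists n lam \<longleftrightarrow> strip_size n lam + 1 \<le> length lam + largest_part lam"

definition num_columns :: "(nat \<times> nat) set \<Rightarrow> nat" where
  "num_columns R = card (snd ` R)"

text \<open>The modification rule, as a relation: mod_rule n lam i tau holds iff
  i_{2n}(lam) = i (finite) and tau_{2n}(lam) = tau.  If no such i exists,
  i_{2n}(lam) = infinity.  (The rule is deterministic, so i and tau are unique.)\<close>
inductive mod_rule :: "nat \<Rightarrow> nat list \<Rightarrow> nat \<Rightarrow> nat list \<Rightarrow> bool" where
  base: "length lam \<le> n \<Longrightarrow> mod_rule n lam 0 lam"
| step: "\<lbrakk> n < length lam;
           border_strip_exists n lam;
           0 < strip_size n lam;
           is_partition mu;
           diagram mu = diagram lam - border_strip n lam;
           mod_rule n mu i tau \<rbrakk>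
         \<Longrightarrow> mod_rule n lam (num_columns (border_strip n lam) + i) tau"

definition i2n_finite :: "nat \<Rightarrow> nat list \<Rightarrow> bool" where
  "i2n_finite n lam \<longleftrightarrow> (\<exists>i tau. mod_rule n lam i tau)"

end

theory Submission
  imports Defs
begin



definition pp :: "nat list \<Rightarrow> nat \<Rightarrow> nat" where
  "pp lam i = (if i < length lam then lam ! i else 0)"

definition box :: "(nat \<Rightarrow> nat) \<Rightarrow> (nat \<times> nat) set" where
  "box f = {(i, j). 1 \<le> i \<and> 1 \<le> j \<and> j \<le> f (i - 1)}"

definition mk_part :: "(nat \<Rightarrow> nat) \<Rightarrow> nat list" where
  "mk_part f = map f [0..<(LEAST i. f i = 0)]"

lemma pp_antimono:
  assumes "is_partition lam" "i \<le> j" shows "pp lam j \<le> pp lam i"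
proof -
  have s: "sorted_wrt (\<ge>) lam" using assms(1) by (simp add: is_partition_def)
  show ?thesis
  proof (cases "j < length lam")
    case True
    show ?thesis
    proof (cases "i = j")
      case False
      with assms(2) have "i < j" by simp
      then show ?thesis using s True by (auto simp: pp_def sorted_wrt_iff_nth_less)
    qed simp
  qed (simp add: pp_def)
qed

lemma pp_pos:
  assumes "is_partition lam" shows "0 < pp lam i \<longleftrightarrow> i < length lam"
  using assms by (auto simp: pp_def is_partition_def) (metis nth_mem neq0_conv)

lemma diagram_pp: "diagram lam = box (pp lam)"
proof -
  have "\<And>i j. (i, j) \<in> diagram lam \<longleftrightarrow> (i, j) \<in> box (pp lam)"
  proof -
    fix i j
    show "(i, j) \<in> diagram lam \<longleftrightarrow> (i, j) \<in> box (pp lam)"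
      by (cases "i - 1 < length lam") (auto simp: diagram_def box_def pp_def)
  qed
  then show ?thesis by auto
qed

lemma box_inj: assumes "box f = box g" shows "f = g"
proof
  fix i
  have "\<And>j. 1 \<le> j \<Longrightarrow> (j \<le> f i \<longleftrightarrow> j \<le> g i)"
  proof -
    fix j :: nat assume "1 \<le> j"
    have "(Suc i, j) \<in> box f \<longleftrightarrow> (Suc i, j) \<in> box g" using assms by simp
    then show "(j \<le> f i \<longleftrightarrow> j \<le> g i)" using \<open>1 \<le> j\<close> by (simp add: box_def)
  qed
  from this[of "f i"] this[of "g i"] show "f i = g i"
    by (cases "f i = 0"; cases "g i = 0") auto
qed

lemma mk_part:
  assumes am: "\<And>i j. i \<le> j \<Longrightarrow> f j \<le> f i" and z: "f m = 0"
  shows "is_partition (mk_part f)" "pp (mk_part f) = f" "length (mk_part f) \<le> m"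
proof -
  define K where "K = (LEAST i. f i = 0)"
  have fK: "f K = 0" unfolding K_def by (rule LeastI[of _ m]) (rule z)
  have lt: "i < K \<Longrightarrow> f i \<noteq> 0" for i unfolding K_def using not_less_Least by blast
  have ge: "K \<le> i \<Longrightarrow> f i = 0" for i using am[of K i] fK by simp
  have mk: "mk_part f = map f [0..<K]" by (simp add: mk_part_def K_def)
  show "is_partition (mk_part f)" unfolding mk is_partition_def
    by (auto simp: sorted_wrt_iff_nth_less am lt)
  show "pp (mk_part f) = f" by (rule ext) (auto simp: mk pp_def ge)
  show "length (mk_part f) \<le> m" unfolding mk K_def using Least_le[of "\<lambda>i. f i = 0" m, OF z] by simp
qed

lemma pp_inj:
  assumes "is_partition a" "is_partition b" "pp a = pp b" shows "a = b"
proof -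
  have "length a = length b"
  proof -
    have "\<And>i. i < length a \<longleftrightarrow> i < length b" using pp_pos[OF assms(1)] pp_pos[OF assms(2)] assms(3) by metis
    then show ?thesis by (metis less_irrefl nat_neq_iff)
  qed
  moreover have "\<And>i. i < length a \<Longrightarrow> a ! i = b ! i"
    using assms(3) \<open>length a = length b\<close> by (metis pp_def)
  ultimately show ?thesis by (simp add: list_eq_iff_nth_eq)
qed




lemma bs_mem: "(i,j) \<in> border_strip n lam \<longleftrightarrow> 1 \<le> i \<and> 1 \<le> j \<and> j \<le> pp lam (i-1) \<and> pp lam i \<le> j
   \<and> int j - int i \<le> int (strip_size n lam) - int (length lam)"
  by (auto simp: border_strip_def rim_def diagram_pp box_def)

lemma diag_mem: "(i,j) \<in> diagram lam \<longleftrightarrow> 1 \<le> i \<and> 1 \<le> j \<and> j \<le> pp lam (i-1)"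
  by (simp add: diagram_pp box_def)

lemma good_case:
  assumes P: "is_partition lam"
    and q: "int (pp lam r0) - int r0 - 1 = int (strip_size n lam) - int (length lam)"
  shows "diagram lam - border_strip n lam = box (\<lambda>i. if i < r0 then pp lam i else pp lam (i+1) - 1)"
proof -
  define c where "c = int (strip_size n lam) - int (length lam)"
  define f where "f = (\<lambda>i. if i < r0 then pp lam i else pp lam (i+1) - 1)"
  have key: "(i,j) \<in> diagram lam - border_strip n lam \<longleftrightarrow> (i,j) \<in> box f" for i j
  proof (cases "1 \<le> i \<and> 1 \<le> j")
    case False
    then show ?thesis by (auto simp: diag_mem box_def)
  next
    case True
    then obtain r where r: "i = Suc r" by (cases i) auto
    show ?thesis
    proof (cases "r < r0")
      case True
      have "pp lam r0 \<le> pp lam (Suc r)" using pp_antimono[OF P, of "Suc r" r0] True by simp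
      then have "pp lam (Suc r) \<le> j \<Longrightarrow> \<not> int j - int i \<le> c" using q True r unfolding c_def by linarith
      then show ?thesis using True \<open>1 \<le> i \<and> 1 \<le> j\<close> r
        by (auto simp: diag_mem bs_mem box_def f_def c_def)
    next
      case False
      have a1: "pp lam r \<le> pp lam r0" using pp_antimono[OF P, of r0 r] False by simp
      have a2: "pp lam (Suc r) \<le> pp lam r" using pp_antimono[OF P, of r "Suc r"] by simp
      have "j \<le> pp lam r \<Longrightarrow> int j - int i \<le> c" using q False r a1 unfolding c_def by linarith
      then show ?thesis using False \<open>1 \<le> i \<and> 1 \<le> j\<close> r a2
        by (auto simp: diag_mem bs_mem box_def f_def c_def)
    qed
  qed
  show ?thesis unfolding f_def[symmetric] using key by auto
qed




lemma largest_pp: "is_partition lam \<Longrightarrow> largest_part lam = pp lam 0"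
  by (cases lam) (auto simp: largest_part_def pp_def)

lemma bad_case:
  assumes P: "is_partition lam" and nl: "n < length lam" and sp: "0 < strip_size n lam"
    and ex: "border_strip_exists n lam"
    and no: "\<forall>r. int (pp lam r) - int r - 1 \<noteq> int (strip_size n lam) - int (length lam)"
  shows "diagram lam - border_strip n lam \<noteq> box g"
proof
  assume eq: "diagram lam - border_strip n lam = box g"
  define c where "c = int (strip_size n lam) - int (length lam)"
  define q where "q = (\<lambda>r. int (pp lam r) - int r - 1)"
  have c0: "c \<le> q 0" using ex largest_pp[OF P] unfolding border_strip_exists_def c_def q_def by simp
  have c1: "1 - int (length lam) \<le> c" using sp unfolding c_def by simp
  have ql: "q (length lam) < c" using c1 unfolding q_def by (simp add: pp_def)
  define r0 where "r0 = (LEAST r. q r < c)"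
  have r0a: "q r0 < c" unfolding r0_def by (rule LeastI[of _ "length lam"]) (rule ql)
  have r0b: "r < r0 \<Longrightarrow> \<not> q r < c" for r unfolding r0_def using not_less_Least by blast
  have nq: "q r \<noteq> c" for r using no unfolding q_def c_def by auto
  have "r0 \<noteq> 0" proof assume "r0 = 0" then show False using r0a c0 by simp qed
  then obtain r where r: "r0 = Suc r" by (cases r0) auto
  have qr: "c < q r" using r0b[of r] nq[of r] r by force
  have qr1: "q (Suc r) < c" using r0a r by simp
  have cr: "- int r \<le> c"
  proof (cases "Suc r < length lam")
    case True
    then have "0 < pp lam (Suc r)" using pp_pos[OF P] by blast
    then show ?thesis using qr1 unfolding q_def by linarith
  next
    case False
    then show ?thesis using c1 by linarith
  qed
  define j where "j = nat (c + int r + 1)"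
  have j: "int j = c + int r + 1" unfolding j_def using cr by simp
  have in1: "(Suc r, j) \<in> border_strip n lam"
    unfolding bs_mem using j qr qr1 cr unfolding q_def c_def by auto
  have in2a: "(Suc r, Suc j) \<in> diagram lam"
    unfolding diag_mem using j qr qr1 cr unfolding q_def c_def by auto
  have in2b: "(Suc r, Suc j) \<notin> border_strip n lam"
    unfolding bs_mem using j qr qr1 cr unfolding q_def c_def by auto
  have in2: "(Suc r, Suc j) \<in> diagram lam - border_strip n lam" using in2a in2b by simp
  have "Suc j \<le> g r" using in2 eq by (auto simp: box_def)
  then have "(Suc r, j) \<in> box g" using j cr by (auto simp: box_def)
  then show False using eq in1 by auto
qed




definition MS :: "nat \<Rightarrow> nat list \<Rightarrow> int set" where
  "MS n lam = range (\<lambda>i. int (pp lam i) - int i + int n)"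

definition PP :: "int set \<Rightarrow> bool" where
  "PP M \<longleftrightarrow> 0 \<in> M \<and> (\<forall>y>0. y \<in> M \<or> - y \<in> M)"

lemma s_int: "n < length lam \<Longrightarrow> int (strip_size n lam) = 2 * int (length lam) - 2 * int n - 2"
  by (simp add: strip_size_def)

lemma v_strict:
  assumes P: "is_partition lam" and "i < j"
  shows "int (pp lam j) - int j + int n < int (pp lam i) - int i + int n"
  using pp_antimono[OF P, of i j] assms(2) by linarith

lemma v_inj:
  assumes P: "is_partition lam"
  shows "int (pp lam i) - int i + int n = int (pp lam j) - int j + int n \<longleftrightarrow> i = j"
  using v_strict[OF P, of i j n] v_strict[OF P, of j i n] by (cases i j rule: linorder_cases) auto

lemma ms_step:
  assumes P: "is_partition lam" and nl: "n < length lam" and sp: "0 < strip_size n lam"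
    and q: "int (pp lam r0) - int r0 - 1 = int (strip_size n lam) - int (length lam)"
  shows "range (\<lambda>i. int (if i < r0 then pp lam i else pp lam (i+1) - 1) - int i + int n)
     = insert (int n + 1 - int (length lam)) (MS n lam - {int (pp lam r0) - int r0 + int n})"
    (is "range ?g = insert ?a (MS n lam - {?t})")
proof -
  define v where "v = (\<lambda>i. int (pp lam i) - int i + int n)"
  have MSv: "MS n lam = range v" by (simp add: MS_def v_def)
  have vinj: "v i = v j \<longleftrightarrow> i = j" for i j using v_inj[OF P] unfolding v_def by blast
  have r0l: "r0 < length lam"
  proof (rule ccontr)
    assume "\<not> r0 < length lam"
    then have "pp lam r0 = 0" by (simp add: pp_def)
    then show False using q sp \<open>\<not> r0 < length lam\<close> by linarith
  qed
  have tv: "?t = v r0" by (simp add: v_def)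
  have "range ?g \<subseteq> insert ?a (range v - {v r0})"
  proof
    fix x assume "x \<in> range ?g"
    then obtain i where x: "x = ?g i" by blast
    show "x \<in> insert ?a (range v - {v r0})"
    proof (cases "i < r0")
      case True
      then have "x = v i" by (simp add: x v_def)
      then show ?thesis using True vinj[of i r0] by auto
    next
      case False
      show ?thesis
      proof (cases "Suc i < length lam")
        case True
        then have "0 < pp lam (Suc i)" using pp_pos[OF P] by blast
        then have "x = v (Suc i)" using False by (simp add: x v_def)
        then show ?thesis using False vinj[of "Suc i" r0] by auto
      next
        case F2: False
        then have z: "pp lam (Suc i) = 0" by (simp add: pp_def)
        show ?thesis
        proof (cases "i < length lam")
          case True
          then have "i = length lam - 1" using F2 by simp
          then have "x = ?a" using False z nl by (simp add: x)
          then show ?thesis by simp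
        next
          case F3: False
          then have "pp lam i = 0" by (simp add: pp_def)
          then have "x = v i" using False z by (simp add: x v_def)
          then show ?thesis using F3 r0l vinj[of i r0] by auto
        qed
      qed
    qed
  qed
  moreover have "insert ?a (range v - {v r0}) \<subseteq> range ?g"
  proof
    fix x assume x: "x \<in> insert ?a (range v - {v r0})"
    show "x \<in> range ?g"
    proof (cases "x = ?a")
      case True
      have "\<not> length lam - 1 < r0" using r0l by simp
      moreover have "pp lam (length lam - 1 + 1) = 0"
      proof -
        have "length lam - 1 + 1 = length lam" using nl by simp
        then show ?thesis by (simp add: pp_def)
      qed
      ultimately have "?g (length lam - 1) = ?a" using nl by simp
      then have "x = ?g (length lam - 1)" using True by simp
      then show ?thesis by (rule image_eqI[OF _ UNIV_I])
    next
      case False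
      then obtain j where j: "x = v j" "j \<noteq> r0" using x by blast
      show ?thesis
      proof (cases "j < r0")
        case True
        then have "?g j = x" by (simp add: j v_def)
        then show ?thesis by (rule image_eqI[OF sym UNIV_I])
      next
        case F: False
        show ?thesis
        proof (cases "j < length lam")
          case True
          then have "0 < pp lam j" using pp_pos[OF P] by blast
          moreover obtain j' where jj: "j = Suc j'" using F j(2) by (cases j) auto
          moreover have "\<not> j' < r0" using F j(2) jj by auto
          ultimately have "?g j' = x" by (simp add: j v_def of_nat_diff)
          then show ?thesis by (rule image_eqI[OF sym UNIV_I])
        next
          case F2: False
          then have "pp lam j = 0" "pp lam (j+1) = 0" by (simp_all add: pp_def)
          then have "?g j = x" using F by (simp add: j v_def)
          then show ?thesis by (rule image_eqI[OF sym UNIV_I])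
        qed
      qed
    qed
  qed
  ultimately show ?thesis unfolding MSv tv by blast
qed

lemma PP_swap:
  assumes "0 < t" "t \<in> M" shows "PP (insert (- t) (M - {t})) = PP M"
proof
  assume H: "PP (insert (- t) (M - {t}))"
  have "0 \<in> M" using H assms(1) unfolding PP_def by auto
  moreover have "y \<in> M \<or> - y \<in> M" if "y > 0" for y
  proof (cases "y = t")
    case True then show ?thesis using assms by simp
  next
    case False
    then have "y \<in> insert (- t) (M - {t}) \<or> - y \<in> insert (- t) (M - {t})" using H that unfolding PP_def by blast
    then show ?thesis using False that assms(1) by auto
  qed
  ultimately show "PP M" unfolding PP_def by blast
next
  assume H: "PP M"
  have "0 \<in> insert (- t) (M - {t})" using H assms(1) unfolding PP_def by auto
  moreover have "y \<in> insert (- t) (M - {t}) \<or> - y \<in> insert (- t) (M - {t})" if "y > 0" for y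
  proof (cases "y = t")
    case True then show ?thesis by simp
  next
    case False
    then have "y \<in> M \<or> - y \<in> M" using H that unfolding PP_def by blast
    then show ?thesis using False that assms(1) by auto
  qed
  ultimately show "PP (insert (- t) (M - {t}))" unfolding PP_def by blast
qed

lemma a_notin:
  assumes P: "is_partition lam" and nl: "n < length lam"
  shows "int n + 1 - int (length lam) \<notin> MS n lam"
proof
  assume "int n + 1 - int (length lam) \<in> MS n lam"
  then obtain i where i: "int (pp lam i) - int i + int n = int n + 1 - int (length lam)"
    unfolding MS_def by auto
  show False
  proof (cases "i < length lam")
    case True
    then have "0 < pp lam i" using pp_pos[OF P] by blast
    then show False using i True by linarith
  next
    case False
    then show False using i by (simp add: pp_def)
  qed
qed

lemma PP_base: "length lam \<le> n \<Longrightarrow> PP (MS n lam)"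
proof -
  assume l: "length lam \<le> n"
  have "\<And>i. n \<le> i \<Longrightarrow> pp lam i = 0" using l by (simp add: pp_def)
  have 0: "0 \<in> MS n lam" unfolding MS_def
    by (rule image_eqI[of _ _ n]) (use \<open>\<And>i. n \<le> i \<Longrightarrow> pp lam i = 0\<close> in auto)
  have "- y \<in> MS n lam" if "y > 0" for y unfolding MS_def
    by (rule image_eqI[of _ _ "n + nat y"]) (use \<open>\<And>i. n \<le> i \<Longrightarrow> pp lam i = 0\<close> that in auto)
  then show ?thesis using 0 by (simp add: PP_def)
qed




lemma fwd: "mod_rule n lam i tau \<Longrightarrow> is_partition lam \<Longrightarrow> PP (MS n lam)"
proof (induction rule: mod_rule.induct)
  case (base lam n)
  then show ?case using PP_base by blast
next
  case (step n lam mu i tau)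
  have P: "is_partition lam" by fact
  have nl: "n < length lam" and sp: "0 < strip_size n lam" and ex: "border_strip_exists n lam"
    and Pm: "is_partition mu" and dg: "diagram mu = diagram lam - border_strip n lam"
    using step.hyps by auto
  have PPm: "PP (MS n mu)" using step.IH Pm by blast
  have "\<exists>r0. int (pp lam r0) - int r0 - 1 = int (strip_size n lam) - int (length lam)"
  proof (rule ccontr)
    assume "\<not> ?thesis"
    then have "diagram lam - border_strip n lam \<noteq> box (pp mu)"
      by (intro bad_case[OF P nl sp ex]) auto
    then show False using dg diagram_pp by metis
  qed
  then obtain r0 where q: "int (pp lam r0) - int r0 - 1 = int (strip_size n lam) - int (length lam)" by blast
  have "box (pp mu) = box (\<lambda>i. if i < r0 then pp lam i else pp lam (i+1) - 1)"
    using good_case[OF P q] dg diagram_pp by metis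
  then have ppm: "pp mu = (\<lambda>i. if i < r0 then pp lam i else pp lam (i+1) - 1)" by (rule box_inj)
  define t where "t = int (pp lam r0) - int r0 + int n"
  have MSm: "MS n mu = insert (int n + 1 - int (length lam)) (MS n lam - {t})"
    unfolding t_def MS_def[of n mu] ppm using ms_step[OF P nl sp q] by simp
  have tv: "t = int (length lam) - int n - 1" using q s_int[OF nl] unfolding t_def by linarith
  have tpos: "0 < t" using sp tv nl by (simp add: strip_size_def)
  have tin: "t \<in> MS n lam" unfolding t_def MS_def by simp
  have "int n + 1 - int (length lam) = - t" using tv by simp
  then have "MS n mu = insert (- t) (MS n lam - {t})" using MSm by simp
  then show ?case using PPm PP_swap[OF tpos tin] by simp
qed

lemma bwd: "is_partition lam \<Longrightarrow> PP (MS n lam) \<Longrightarrow> i2n_finite n lam"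
proof (induction "length lam" arbitrary: lam rule: less_induct)
  case less
  have P: "is_partition lam" and PPl: "PP (MS n lam)" by fact+
  show ?case
  proof (cases "length lam \<le> n")
    case True
    then show ?thesis unfolding i2n_finite_def using mod_rule.base by blast
  next
    case False
    then have nl: "n < length lam" by simp
    define t where "t = int (length lam) - int n - 1"
    have an: "- t \<notin> MS n lam" using a_notin[OF P nl] unfolding t_def by (simp add: algebra_simps)
    have tpos: "0 < t"
    proof (rule ccontr)
      assume "\<not> 0 < t"
      then have "t = 0" using nl unfolding t_def by simp
      then show False using an PPl unfolding PP_def by simp
    qed
    have tin: "t \<in> MS n lam" using PPl tpos an unfolding PP_def by blast
    then obtain r0 where r0: "int (pp lam r0) - int r0 + int n = t" unfolding MS_def by auto
    have q: "int (pp lam r0) - int r0 - 1 = int (strip_size n lam) - int (length lam)"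
      using r0 s_int[OF nl] unfolding t_def by linarith
    have sp: "0 < strip_size n lam" using tpos unfolding t_def strip_size_def by simp
    have ex: "border_strip_exists n lam"
    proof -
      have "pp lam r0 \<le> pp lam 0" using pp_antimono[OF P] by simp
      then show ?thesis using q largest_pp[OF P] unfolding border_strip_exists_def by linarith
    qed
    have r0l: "r0 < length lam"
    proof (rule ccontr)
      assume "\<not> r0 < length lam"
      then have "pp lam r0 = 0" by (simp add: pp_def)
      then show False using r0 tpos \<open>\<not> r0 < length lam\<close> unfolding t_def by linarith
    qed
    define f where "f = (\<lambda>i. if i < r0 then pp lam i else pp lam (i+1) - 1)"
    have am: "f j \<le> f i" if "i \<le> j" for i j
    proof -
      have "pp lam (j+1) \<le> pp lam i" "pp lam j \<le> pp lam i" "pp lam (j+1) \<le> pp lam (i+1)"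
        using pp_antimono[OF P] that by auto
      then show ?thesis unfolding f_def using that by auto
    qed
    have fz: "f (length lam - 1) = 0"
    proof -
      have "length lam - 1 + 1 = length lam" using nl by simp
      then show ?thesis using r0l unfolding f_def by (simp add: pp_def)
    qed
    define mu where "mu = mk_part f"
    have Pm: "is_partition mu" and ppm: "pp mu = f" and lm: "length mu \<le> length lam - 1"
      using mk_part[of f "length lam - 1", OF am fz] unfolding mu_def by auto
    have dg: "diagram mu = diagram lam - border_strip n lam"
      using good_case[OF P q] diagram_pp ppm unfolding f_def by metis
    have "MS n mu = insert (int n + 1 - int (length lam)) (MS n lam - {t})"
      unfolding MS_def[of n mu] ppm f_def using ms_step[OF P nl sp q] r0 by simp
    moreover have "int n + 1 - int (length lam) = - t" unfolding t_def by simp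
    ultimately have "MS n mu = insert (- t) (MS n lam - {t})" by simp
    then have "PP (MS n mu)" using PPl PP_swap[OF tpos tin] by simp
    moreover have "length mu < length lam" using lm nl by simp
    ultimately have "i2n_finite n mu" using less.hyps Pm by blast
    then obtain i tau where "mod_rule n mu i tau" unfolding i2n_finite_def by blast
    then have "mod_rule n lam (num_columns (border_strip n lam) + i) tau"
      by (rule mod_rule.step[OF nl ex sp Pm dg])
    then show ?thesis unfolding i2n_finite_def by blast
  qed
qed

lemma fin_iff: "is_partition lam \<Longrightarrow> i2n_finite n lam \<longleftrightarrow> PP (MS n lam)"
  using fwd bwd unfolding i2n_finite_def by blast




definition WW :: "nat \<Rightarrow> nat list \<Rightarrow> nat set" where
  "WW L lam = (\<lambda>i. pp lam i + (L - 1 - i)) ` {0..<L}"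

definition Qc :: "nat \<Rightarrow> nat set \<Rightarrow> bool" where
  "Qc N B \<longleftrightarrow> N \<in> B \<and> (\<forall>y\<in>{1..N}. N + y \<in> B \<or> N - y \<in> B)"

definition fB :: "nat \<Rightarrow> nat set \<Rightarrow> nat \<Rightarrow> nat" where
  "fB L B i = (if i < L then rev (sorted_list_of_set B) ! i - (L - 1 - i) else 0)"

definition GG :: "nat \<Rightarrow> nat set \<Rightarrow> nat list" where
  "GG L B = mk_part (fB L B)"

lemma len_bound:
  assumes P: "is_partition lam" and k: "pp lam 0 \<le> k" and PPl: "PP (MS n lam)"
  shows "length lam \<le> 2*n + k + 1"
proof (rule ccontr)
  assume "\<not> ?thesis"
  then have nl: "n < length lam" and big: "2*n + k + 1 < length lam" by auto
  have an: "int n + 1 - int (length lam) \<notin> MS n lam" by (rule a_notin[OF P nl])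
  have "int (length lam) - int n - 1 > 0" using big by simp
  then have "int (length lam) - int n - 1 \<in> MS n lam \<or> - (int (length lam) - int n - 1) \<in> MS n lam"
    using PPl unfolding PP_def by blast
  then have "int (length lam) - int n - 1 \<in> MS n lam" using an by (simp add: algebra_simps)
  then obtain i where i: "int (pp lam i) - int i + int n = int (length lam) - int n - 1"
    unfolding MS_def by auto
  have "pp lam i \<le> k" using pp_antimono[OF P, of 0 i] k by simp
  then show False using i big by linarith
qed

context
  fixes n k :: nat
begin

abbreviation "NN \<equiv> n + k"
abbreviation "LL \<equiv> 2*n + k + 1"

lemma mem_W:
  assumes P: "is_partition lam" and k: "pp lam 0 \<le> k" and l: "length lam \<le> LL"
  shows "int z - int NN \<in> MS n lam \<longleftrightarrow> z \<in> WW LL lam"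
proof
  assume "int z - int NN \<in> MS n lam"
  then obtain i where i: "int (pp lam i) - int i + int n = int z - int NN" unfolding MS_def by auto
  have iL: "i < LL"
  proof (rule ccontr)
    assume "\<not> i < LL"
    then have "pp lam i = 0" using l by (simp add: pp_def)
    then show False using i \<open>\<not> i < LL\<close> by linarith
  qed
  then have "z = pp lam i + (LL - 1 - i)" using i by linarith
  then show "z \<in> WW LL lam" unfolding WW_def using iL by auto
next
  assume "z \<in> WW LL lam"
  then obtain i where "i < LL" "z = pp lam i + (LL - 1 - i)" unfolding WW_def by auto
  then have "int (pp lam i) - int i + int n = int z - int NN" by linarith
  then show "int z - int NN \<in> MS n lam" unfolding MS_def by (rule image_eqI[OF sym UNIV_I])
qed

lemma W_sub:
  assumes P: "is_partition lam" and k: "pp lam 0 \<le> k"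
  shows "WW LL lam \<subseteq> {0..2*NN}"
proof
  fix z assume "z \<in> WW LL lam"
  then obtain i where "i < LL" "z = pp lam i + (LL - 1 - i)" unfolding WW_def by auto
  moreover have "pp lam i \<le> k" using pp_antimono[OF P, of 0 i] k by simp
  ultimately show "z \<in> {0..2*NN}" by simp
qed

lemma low_in:
  assumes P: "is_partition lam" and l: "length lam \<le> LL" and y: "y < - int NN"
  shows "y \<in> MS n lam"
proof -
  have "length lam \<le> nat (int n - y)" using l y by linarith
  then have "pp lam (nat (int n - y)) = 0" by (simp add: pp_def)
  then have "int (pp lam (nat (int n - y))) - int (nat (int n - y)) + int n = y" using y by simp
  then show ?thesis unfolding MS_def by (rule image_eqI[OF sym UNIV_I])
qed

lemma PP_Qc:
  assumes P: "is_partition lam" and k: "pp lam 0 \<le> k" and l: "length lam \<le> LL"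
  shows "PP (MS n lam) \<longleftrightarrow> Qc NN (WW LL lam)"
proof -
  have m: "\<And>z. int z - int NN \<in> MS n lam \<longleftrightarrow> z \<in> WW LL lam" using mem_W[OF P k l] by blast
  have m0: "0 \<in> MS n lam \<longleftrightarrow> NN \<in> WW LL lam" using m[of NN] by simp
  have mp: "int y \<in> MS n lam \<longleftrightarrow> NN + y \<in> WW LL lam" for y using m[of "NN + y"] by simp
  have mm: "y \<le> NN \<Longrightarrow> - int y \<in> MS n lam \<longleftrightarrow> NN - y \<in> WW LL lam" for y
    using m[of "NN - y"] by (simp add: of_nat_diff)
  show ?thesis
  proof
    assume H: "PP (MS n lam)"
    have "NN + y \<in> WW LL lam \<or> NN - y \<in> WW LL lam" if "y \<in> {1..NN}" for y
    proof -
      have "int y > 0" using that by simp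
      then have "int y \<in> MS n lam \<or> - int y \<in> MS n lam" using H unfolding PP_def by blast
      then show ?thesis using mp mm that by auto
    qed
    then show "Qc NN (WW LL lam)" using H m0 unfolding PP_def Qc_def by blast
  next
    assume H: "Qc NN (WW LL lam)"
    have "y \<in> MS n lam \<or> - y \<in> MS n lam" if "y > 0" for y
    proof (cases "y \<le> int NN")
      case True
      then have "nat y \<in> {1..NN}" using that by auto
      then have "NN + nat y \<in> WW LL lam \<or> NN - nat y \<in> WW LL lam" using H unfolding Qc_def by blast
      then show ?thesis using mp[of "nat y"] mm[of "nat y"] that True by auto
    next
      case False
      then show ?thesis using low_in[OF P l, of "- y"] by simp
    qed
    then show "PP (MS n lam)" using H m0 unfolding PP_def Qc_def by blast
  qed
qed

end




lemma ys_lower: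
  assumes s: "sorted_wrt (<) (ys :: nat list)" and "b \<le> a" "a < length ys"
  shows "ys ! b + (a - b) \<le> ys ! a"
  using assms(2,3)
proof (induction a)
  case 0 then show ?case by simp
next
  case (Suc a)
  show ?case
  proof (cases "b = Suc a")
    case False
    then have "b \<le> a" using Suc.prems by simp
    then have "ys ! b + (a - b) \<le> ys ! a" using Suc by simp
    moreover have "ys ! a < ys ! Suc a" using s Suc.prems by (simp add: sorted_wrt_iff_nth_less)
    ultimately show ?thesis using \<open>b \<le> a\<close> by simp
  qed simp
qed

lemma sl_facts:
  assumes "finite (B :: nat set)" "card B = L"
  shows "length (sorted_list_of_set B) = L" "sorted_wrt (<) (sorted_list_of_set B)"
        "set (sorted_list_of_set B) = B"
  using assms by (auto simp: sorted_list_of_set.strict_sorted_key_list_of_set)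

lemma fB_facts:
  assumes "finite (B :: nat set)" "card B = L"
  shows "\<And>i j. i \<le> j \<Longrightarrow> fB L B j \<le> fB L B i" "fB L B L = 0"
    "\<And>i. i < L \<Longrightarrow> fB L B i + (L - 1 - i) = rev (sorted_list_of_set B) ! i"
proof -
  define ys where "ys = sorted_list_of_set B"
  have ly: "length ys = L" and sy: "sorted_wrt (<) ys" using sl_facts[OF assms] unfolding ys_def by auto
  have rv: "i < L \<Longrightarrow> rev ys ! i = ys ! (L - 1 - i)" for i using ly by (simp add: rev_nth)
  have lo: "i < L \<Longrightarrow> L - 1 - i \<le> ys ! (L - 1 - i)" for i
    using ys_lower[OF sy, of 0 "L - 1 - i"] ly by simp
  show "fB L B L = 0" by (simp add: fB_def)
  show "\<And>i. i < L \<Longrightarrow> fB L B i + (L - 1 - i) = rev (sorted_list_of_set B) ! i"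
  proof -
    fix i assume i: "i < L"
    have "fB L B i = rev ys ! i - (L - 1 - i)" using i unfolding fB_def ys_def by simp
    then show "fB L B i + (L - 1 - i) = rev (sorted_list_of_set B) ! i"
      using rv[OF i] lo[OF i] unfolding ys_def[symmetric] by (metis le_add_diff_inverse2)
  qed
  show "\<And>i j. i \<le> j \<Longrightarrow> fB L B j \<le> fB L B i"
  proof -
    fix i j :: nat assume ij: "i \<le> j"
    show "fB L B j \<le> fB L B i"
    proof (cases "j < L")
      case True
      have "ys ! (L - 1 - j) + ((L - 1 - i) - (L - 1 - j)) \<le> ys ! (L - 1 - i)"
        using ys_lower[OF sy, of "L - 1 - j" "L - 1 - i"] ij True ly by simp
      then show ?thesis using True ij rv unfolding fB_def ys_def[symmetric] by simp
    qed (simp add: fB_def)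
  qed
qed

lemma GG_facts:
  assumes "finite (B :: nat set)" "card B = L"
  shows "is_partition (GG L B)" "pp (GG L B) = fB L B" "length (GG L B) \<le> L" "WW L (GG L B) = B"
proof -
  note f = fB_facts[OF assms]
  show "is_partition (GG L B)" "pp (GG L B) = fB L B" "length (GG L B) \<le> L"
    unfolding GG_def using mk_part[of "fB L B" L, OF f(1) f(2)] by auto
  then have "WW L (GG L B) = (\<lambda>i. rev (sorted_list_of_set B) ! i) ` {0..<L}"
    unfolding WW_def using f(3) by (auto intro!: image_cong)
  also have "\<dots> = set (rev (sorted_list_of_set B))"
    using sl_facts[OF assms] by (auto simp: set_conv_nth)
  also have "\<dots> = B" using sl_facts[OF assms] by simp
  finally show "WW L (GG L B) = B" .
qed

lemma sorted_img:
  assumes "\<And>i j. i < j \<Longrightarrow> j < L \<Longrightarrow> g j < (g i :: nat)"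
  shows "rev (sorted_list_of_set (g ` {0..<L})) = map g [0..<L]"
proof -
  have inj: "inj_on g {0..<L}"
    by (rule inj_onI) (metis assms atLeastLessThan_iff linorder_neqE_nat less_irrefl)
  have "sorted_wrt (<) (rev (map g [0..<L]))"
    unfolding sorted_wrt_rev by (auto simp: sorted_wrt_iff_nth_less assms)
  moreover have "set (rev (map g [0..<L])) = g ` {0..<L}" by simp
  moreover have "length (rev (map g [0..<L])) = card (g ` {0..<L})" using card_image[OF inj] by simp
  ultimately have "sorted_list_of_set (g ` {0..<L}) = rev (map g [0..<L])"
    using sorted_list_of_set_unique[of "g ` {0..<L}" "rev (map g [0..<L])"] by simp
  then show ?thesis by simp
qed

lemma g_strict:
  assumes P: "is_partition lam" and "i < j" "j < L"
  shows "pp lam j + (L - 1 - j) < pp lam i + (L - 1 - i)"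
  using pp_antimono[OF P, of i j] assms(2,3) by simp

lemma W_card:
  assumes P: "is_partition lam"
  shows "card (WW L lam) = L"
proof -
  have "inj_on (\<lambda>i. pp lam i + (L - 1 - i)) {0..<L}"
  proof (rule inj_onI)
    fix i j assume i: "i \<in> {0..<L}" and j: "j \<in> {0..<L}" and e: "pp lam i + (L - 1 - i) = pp lam j + (L - 1 - j)"
    show "i = j"
    proof (rule ccontr)
      assume "i \<noteq> j"
      then consider "i < j" | "j < i" by linarith
      then show False
      proof cases
        case 1 then show False using g_strict[OF P 1, of L] j e by simp
      next
        case 2 then show False using g_strict[OF P 2, of L] i e by simp
      qed
    qed
  qed
  then have "card ((\<lambda>i. pp lam i + (L - 1 - i)) ` {0..<L}) = card {0..<L}" by (rule card_image)
  then show ?thesis unfolding WW_def by simp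
qed




definition psi :: "nat \<Rightarrow> nat set \<times> nat set \<Rightarrow> nat set" where
  "psi N DE = insert N ((\<lambda>y. N + y) ` (fst DE \<union> snd DE) \<union> (\<lambda>y. N - y) ` ({1..N} - snd DE))"

definition phi :: "nat \<Rightarrow> nat set \<Rightarrow> nat set \<times> nat set" where
  "phi N B = ({y\<in>{1..N}. N + y \<in> B \<and> N - y \<in> B}, {y\<in>{1..N}. N + y \<in> B \<and> N - y \<notin> B})"

lemma psi_up: "y \<ge> 1 \<Longrightarrow> N + y \<in> psi N (D, E) \<longleftrightarrow> y \<in> D \<union> E"
  unfolding psi_def by auto

lemma psi_down: "y \<in> {1..N} \<Longrightarrow> N - y \<in> psi N (D, E) \<longleftrightarrow> y \<notin> E"
proof -
  assume y: "y \<in> {1..N}"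
  have inj: "inj_on (\<lambda>y. N - y) {1..N}" by (auto simp: inj_on_def)
  have "N - y \<in> (\<lambda>y. N - y) ` ({1..N} - E) \<longleftrightarrow> y \<in> {1..N} - E"
    by (rule inj_on_image_mem_iff[OF inj]) (use y in auto)
  moreover have "N - y \<noteq> N" "\<And>z. N - y \<noteq> N + z" using y by auto
  ultimately show ?thesis unfolding psi_def using y by auto
qed

lemma psi_phi:
  assumes s: "B \<subseteq> {0..2*N}" and q: "Qc N B"
  shows "psi N (phi N B) = B"
proof -
  obtain D E where DE: "phi N B = (D, E)" by fastforce
  have "psi N (D, E) = B"
  proof (rule set_eqI)
    fix z
    show "z \<in> psi N (D, E) \<longleftrightarrow> z \<in> B"
    proof (cases z N rule: linorder_cases)
      case less
      then have z: "z = N - (N - z)" "N - z \<in> {1..N}" by auto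
      have "N - z \<notin> E \<longleftrightarrow> z \<in> B" using DE q z unfolding phi_def Qc_def by auto
      then show ?thesis using psi_down[OF z(2), of D E] z(1) by simp
    next
      case equal
      then show ?thesis using q unfolding psi_def Qc_def by simp
    next
      case greater
      then have z: "z = N + (z - N)" "z - N \<ge> 1" by auto
      show ?thesis
      proof (cases "z - N \<le> N")
        case True
        have "z - N \<in> D \<union> E \<longleftrightarrow> z \<in> B" using DE True z unfolding phi_def by auto
        then show ?thesis using psi_up[OF z(2), of N D E] z(1) by simp
      next
        case False
        then have "z \<notin> B" using s z by auto
        moreover have "z \<notin> psi N (D, E)" using False z DE unfolding psi_def phi_def by auto
        ultimately show ?thesis by simp
      qed
    qed
  qed
  then show ?thesis using DE by simp
qed

lemma psi_card:
  assumes "D \<subseteq> {1..N}" "E \<subseteq> {1..N}" "D \<inter> E = {}"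
  shows "card (psi N (D, E)) = 1 + card D + N"
proof -
  define A where "A = (\<lambda>y. N + y) ` (D \<union> E)"
  define C where "C = (\<lambda>y. N - y) ` ({1..N} - E)"
  have fD: "finite D" "finite E" using assms finite_subset by blast+
  have cA: "card A = card D + card E" unfolding A_def
    using card_image[of "\<lambda>y. N + y" "D \<union> E"] card_Un_disjoint[OF fD assms(3)] by (simp add: inj_on_def)
  have "inj_on (\<lambda>y. N - y) ({1..N} - E)" by (auto simp: inj_on_def)
  then have cC: "card C = N - card E" unfolding C_def
    using card_image card_Diff_subset[OF fD(2) assms(2)] by fastforce
  have cE: "card E \<le> N" using card_mono[OF _ assms(2)] by simp
  have disj: "A \<inter> C = {}" unfolding A_def C_def using assms by auto
  have fin: "finite A" "finite C" unfolding A_def C_def using fD by auto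
  have nin: "N \<notin> A \<union> C" unfolding A_def C_def using assms by auto
  have "psi N (D, E) = insert N (A \<union> C)" unfolding psi_def A_def C_def by simp
  then have "card (psi N (D, E)) = Suc (card A + card C)"
    using nin fin card_Un_disjoint[OF fin disj] by simp
  then show ?thesis using cA cC cE by simp
qed

lemma psi_sub: "psi N (D, E) \<subseteq> {0..2*N}" if "D \<subseteq> {1..N}" "E \<subseteq> {1..N}"
  using that unfolding psi_def by auto

lemma count_T:
  "card {B. B \<subseteq> {0..2*N} \<and> card B = N + n + 1 \<and> Qc N B} = (N choose n) * 2 ^ (N - n)"
proof -
  define T where "T = {B. B \<subseteq> {0..2*N} \<and> card B = N + n + 1 \<and> Qc N B}"
  define \<Sigma> where "\<Sigma> = Sigma {D. D \<subseteq> {1..N} \<and> card D = n} (\<lambda>D. Pow ({1..N} - D))"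
  have b: "bij_betw (phi N) T \<Sigma>"
  proof (rule bij_betw_byWitness[where f'="psi N"])
    show "\<forall>B\<in>T. psi N (phi N B) = B" using psi_phi unfolding T_def by blast
  next
    show "\<forall>DE\<in>\<Sigma>. phi N (psi N DE) = DE"
    proof
      fix DE assume "DE \<in> \<Sigma>"
      then obtain D E where DE: "DE = (D, E)" "D \<subseteq> {1..N}" "E \<subseteq> {1..N}" "D \<inter> E = {}"
        unfolding \<Sigma>_def by auto
      have e1: "{y\<in>{1..N}. N + y \<in> psi N (D, E) \<and> N - y \<in> psi N (D, E)} = {y\<in>{1..N}. y \<in> D \<union> E \<and> y \<notin> E}"
        using psi_up[of _ N D E] psi_down[of _ N D E] by auto
      have e2: "{y\<in>{1..N}. N + y \<in> psi N (D, E) \<and> N - y \<notin> psi N (D, E)} = {y\<in>{1..N}. y \<in> D \<union> E \<and> y \<in> E}"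
        using psi_up[of _ N D E] psi_down[of _ N D E] by auto
      have "fst (phi N (psi N (D, E))) = D"
        unfolding phi_def fst_conv e1 using DE by auto
      moreover have "snd (phi N (psi N (D, E))) = E"
        unfolding phi_def snd_conv e2 using DE by auto
      ultimately show "phi N (psi N DE) = DE" unfolding DE(1) by (simp add: prod_eq_iff)
    qed
  next
    show "phi N ` T \<subseteq> \<Sigma>"
    proof
      fix DE assume "DE \<in> phi N ` T"
      then obtain B where B: "B \<in> T" "DE = phi N B" by auto
      obtain D E where DE: "phi N B = (D, E)" by fastforce
      have sub: "D \<subseteq> {1..N}" "E \<subseteq> {1..N}" "D \<inter> E = {}" using DE unfolding phi_def by auto
      have "psi N (D, E) = B" using psi_phi[of B N] B(1) DE unfolding T_def by simp
      moreover have "card B = N + n + 1" using B unfolding T_def by simp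
      ultimately have "card D = n" using psi_card[OF sub] by simp
      then show "DE \<in> \<Sigma>" using B(2) DE sub unfolding \<Sigma>_def by auto
    qed
  next
    show "psi N ` \<Sigma> \<subseteq> T"
    proof
      fix B assume "B \<in> psi N ` \<Sigma>"
      then obtain D E where DE: "B = psi N (D, E)" "D \<subseteq> {1..N}" "E \<subseteq> {1..N}" "D \<inter> E = {}" "card D = n"
        unfolding \<Sigma>_def by auto
      have "Qc N B" unfolding Qc_def DE(1)
      proof (intro conjI ballI)
        show "N \<in> psi N (D, E)" unfolding psi_def by simp
        fix y assume y: "y \<in> {1..N}"
        show "N + y \<in> psi N (D, E) \<or> N - y \<in> psi N (D, E)"
          using psi_up[of y N D E] psi_down[OF y, of D E] y by auto
      qed
      then show "B \<in> T" unfolding T_def using psi_card[OF DE(2-4)] psi_sub[OF DE(2,3)] DE by simp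
    qed
  qed
  have "card T = card \<Sigma>" using bij_betw_same_card[OF b] .
  also have "\<dots> = (\<Sum>D\<in>{D. D \<subseteq> {1..N} \<and> card D = n}. card (Pow ({1..N} - D)))"
    unfolding \<Sigma>_def by (rule card_SigmaI) auto
  also have "\<dots> = (\<Sum>D\<in>{D. D \<subseteq> {1..N} \<and> card D = n}. 2 ^ (N - n))"
  proof (rule sum.cong)
    fix D assume "D \<in> {D. D \<subseteq> {1..N} \<and> card D = n}"
    then have "card ({1..N} - D) = N - n" using card_Diff_subset[of D "{1..N}"] finite_subset[of D "{1..N}"] by auto
    then show "card (Pow ({1..N} - D)) = 2 ^ (N - n)" by (simp add: card_Pow)
  qed simp
  also have "\<dots> = (N choose n) * 2 ^ (N - n)" using n_subsets[of "{1..N}" n] by simp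
  finally show ?thesis unfolding T_def .
qed




theorem mainTheorem2:
  fixes n k :: nat
  shows "card {lam. is_partition lam \<and> largest_part lam \<le> k \<and> i2n_finite n lam}
           = 2 ^ k * ((n + k) choose k)"
proof -
  define L where "L = 2*n + k + 1"
  define N where "N = n + k"
  define S where "S = {lam. is_partition lam \<and> largest_part lam \<le> k \<and> i2n_finite n lam}"
  define T where "T = {B. B \<subseteq> {0..2*N} \<and> card B = N + n + 1 \<and> Qc N B}"
  have LN: "L = N + n + 1" unfolding L_def N_def by simp
  have Sfacts: "is_partition lam \<and> pp lam 0 \<le> k \<and> PP (MS n lam) \<and> length lam \<le> L" if "lam \<in> S" for lam
  proof -
    have P: "is_partition lam" using that unfolding S_def by simp
    then have k: "pp lam 0 \<le> k" using that largest_pp unfolding S_def by simp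
    have PP: "PP (MS n lam)" using that fin_iff[OF P] unfolding S_def by simp
    show ?thesis using P k PP len_bound[OF P k PP] unfolding L_def by simp
  qed
  have b: "bij_betw (WW L) S T"
  proof (rule bij_betw_byWitness[where f'="GG L"])
    show "\<forall>lam\<in>S. GG L (WW L lam) = lam"
    proof
      fix lam assume "lam \<in> S"
      then have P: "is_partition lam" and k: "pp lam 0 \<le> k" and l: "length lam \<le> L"
        using Sfacts by auto
      define g where "g = (\<lambda>i. pp lam i + (L - 1 - i))"
      have gs: "\<And>i j. i < j \<Longrightarrow> j < L \<Longrightarrow> g j < g i" unfolding g_def using g_strict[OF P] by blast
      have W: "WW L lam = g ` {0..<L}" unfolding WW_def g_def by simp
      have rs: "rev (sorted_list_of_set (WW L lam)) = map g [0..<L]" unfolding W by (rule sorted_img[OF gs])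
      have "fB L (WW L lam) = pp lam"
      proof
        fix i show "fB L (WW L lam) i = pp lam i"
        proof (cases "i < L")
          case True
          then have "rev (sorted_list_of_set (WW L lam)) ! i = pp lam i + (L - 1 - i)" using rs g_def by simp
          then show ?thesis using True by (simp add: fB_def)
        next
          case False
          then have "pp lam i = 0" using l by (simp add: pp_def)
          then show ?thesis using False by (simp add: fB_def)
        qed
      qed
      moreover have fw: "finite (WW L lam)" unfolding WW_def by simp
      moreover have cw: "card (WW L lam) = L" using W_card[OF P] .
      ultimately have "pp (GG L (WW L lam)) = pp lam" "is_partition (GG L (WW L lam))"
        using GG_facts(1,2)[OF fw cw] by simp_all
      then show "GG L (WW L lam) = lam" using pp_inj P by blast
    qed
  next
    show "\<forall>B\<in>T. WW L (GG L B) = B"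
    proof
      fix B assume "B \<in> T"
      then have s: "B \<subseteq> {0..2*N}" and c: "card B = L" unfolding T_def LN by auto
      have "finite B" using finite_subset[OF s] by simp
      then show "WW L (GG L B) = B" using GG_facts(4)[OF _ c] by blast
    qed
  next
    show "WW L ` S \<subseteq> T"
    proof
      fix B assume "B \<in> WW L ` S"
      then obtain lam where lam: "lam \<in> S" "B = WW L lam" by auto
      then have P: "is_partition lam" and k: "pp lam 0 \<le> k" and l: "length lam \<le> L"
        and PP: "PP (MS n lam)" using Sfacts by auto
      have "B \<subseteq> {0..2*N}" using W_sub[OF P k] lam unfolding L_def N_def by simp
      moreover have "card B = L" using W_card[OF P] lam by simp
      moreover have "Qc N B" using PP_Qc[OF P k] l PP lam unfolding L_def N_def by simp
      ultimately show "B \<in> T" unfolding T_def LN by simp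
    qed
  next
    show "GG L ` T \<subseteq> S"
    proof
      fix lam assume "lam \<in> GG L ` T"
      then obtain B where B: "B \<in> T" "lam = GG L B" by auto
      then have c: "card B = L" and s: "B \<subseteq> {0..2*N}" and q: "Qc N B"
        unfolding T_def LN by auto
      have fin: "finite B" using finite_subset[OF s] by simp
      note G = GG_facts[OF fin c]
      have P: "is_partition lam" using G B by simp
      have "rev (sorted_list_of_set B) ! 0 \<in> B"
      proof -
        have "length (sorted_list_of_set B) = L" "set (sorted_list_of_set B) = B" using sl_facts[OF fin c] by auto
        moreover have "0 < length (rev (sorted_list_of_set B))" using calculation unfolding L_def by simp
        ultimately show ?thesis using nth_mem[of 0 "rev (sorted_list_of_set B)"] by simp
      qed
      then have "fB L B 0 + (L - 1) \<le> 2 * N" using fB_facts(3)[OF fin c, of 0] s unfolding L_def by auto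
      then have k: "pp lam 0 \<le> k" using G B unfolding L_def N_def by simp
      have l: "length lam \<le> L" using G B by simp
      have "WW L lam = B" using G B by simp
      then have "PP (MS n lam)" using PP_Qc[OF P k] l q unfolding L_def N_def by simp
      then show "lam \<in> S" unfolding S_def using fin_iff[OF P] largest_pp[OF P] k P by simp
    qed
  qed
  have "card S = card T" using bij_betw_same_card[OF b] .
  also have "\<dots> = (N choose n) * 2 ^ (N - n)" unfolding T_def by (rule count_T)
  also have "\<dots> = 2 ^ k * ((n + k) choose k)" unfolding N_def
    using binomial_symmetric[of k "n + k"] by simp
  finally show ?thesis unfolding S_def .
qed


end
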